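(* For $m,n\in\mathbb N$ let $(i(m,n),\tau(m,n))\in\mathbb Z^2$, let $v(n)\ge1$, and let $s(n)$ be positive integers with $s(n)\to\infty$. Let $\alpha,\gamma,c>0$ and assume $\sum_{n=1}^\infty v(n)s(n)^\alpha\exp\{-c\,s(n)^\gamma\}<\infty$. Then for $\mathbb P$-almost every $\omega$, \[ \lim_{n\to\infty}\max_{1\le m\le v(n)}s(n)^\alpha\,P^\omega\Bigl\{\max_{1\le k\le s(n)}\tilde X^{i(m,n),\tau(m,n)}_k\ge c\,s(n)^{\frac12+\gamma}\Bigr\}=0, \] where $\tilde X^{i,\tau}_k=X^{i,\tau}_k-i-Vk$.
   Context: Environment setup: Fix an integer $M\ge1$. $\mathcal P$ = probability vectors $u=(u(y):-M\le y\le M)$, with $u(y)=0$ for $|y|>M$. Environment $\omega=(\omega_{x,\tau})\in\Omega=\mathcal P^{\mathbb Z^2}$, $u^\omega_\tau(x,y)=\omega_{x,\tau}(y)$; under $\mathbb P$ the $\omega_{x,\tau}$ are i.i.d. $p(0,j)=\mathbb Eu_0(0,j)$, $V=\sum_jjp(0,j)$. Backward walk: given $\omega$ and $(i,\tau)\in\mathbb Z^2$, $(X^{i,\tau}_s)_{s\ge0}$ is the Markov chain on $\mathbb Z$ under the quenched law $P^\omega$ with $X^{i,\tau}_0=i$ and $P^\omega(X^{i,\tau}_{s+1}=y\mid X^{i,\tau}_s=x)=u^\omega_{\tau-s}(x,y-x)$ (so steps have absolute value at most $M$). *)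

theory Defs
  imports "HOL-Probability.Probability"
begin

definition Pvec :: "nat \<Rightarrow> (int \<Rightarrow> real) set" where
  "Pvec M = {u. (\<forall>y. 0 \<le> u y) \<and> (\<forall>y. \<bar>y\<bar> > int M \<longrightarrow> u y = 0)
               \<and> (\<Sum>y\<in>{- int M..int M}. u y) = 1}"

definition vec_space :: "(int \<Rightarrow> real) measure" where
  "vec_space = PiM UNIV (\<lambda>_. borel)"

text \<open>The environment law P: i.i.d. product of the one-site law mu over Z^2.
  An environment omega maps (x,tau) to omega_{x,tau}, a vector indexed by y.\<close>
definition env_measure :: "(int \<Rightarrow> real) measure \<Rightarrow> (int \<times> int \<Rightarrow> int \<Rightarrow> real) measure" where
  "env_measure \<mu> = PiM UNIV (\<lambda>_. \<mu>)"

definition drift :: "nat \<Rightarrow> (int \<Rightarrow> real) measure \<Rightarrow> real" where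
  "drift M \<mu> = (\<Sum>j\<in>{- int M..int M}. real_of_int j * (\<integral>u. u j \<partial>\<mu>))"

definition walk_pos :: "int \<Rightarrow> int list \<Rightarrow> nat \<Rightarrow> int" where
  "walk_pos i ds k = i + sum_list (take k ds)"

text \<open>Finite-dimensional law of the
  Markov chain with transitions P(X_{s+1}=y | X_s=x) = omega_{x,tau-s}(y-x);
  steps range over [-M,M].\<close>
definition quenched_prob ::
  "nat \<Rightarrow> (int \<times> int \<Rightarrow> int \<Rightarrow> real) \<Rightarrow> int \<Rightarrow> int \<Rightarrow> nat \<Rightarrow> ((nat \<Rightarrow> int) \<Rightarrow> bool) \<Rightarrow> real" where
  "quenched_prob M \<omega> i \<tau> n E =
     (\<Sum>ds\<in>{ds. length ds = n \<and> set ds \<subseteq> {- int M..int M}}.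
        if E (walk_pos i ds)
        then (\<Prod>k<n. \<omega> (walk_pos i ds k, \<tau> - int k) (ds ! k)) else 0)"

end

theory Submission
  imports Defs "HOL-Real_Asymp.Real_Asymp"
begin



lemma prod_coord_nn:
  fixes f :: "'k \<Rightarrow> 'b \<Rightarrow> ennreal" and \<sigma> :: "'k \<Rightarrow> 'i"
  assumes P: "prob_space \<mu>" and K: "finite K" and inj: "inj_on \<sigma> K"
    and f: "\<And>k. k \<in> K \<Longrightarrow> f k \<in> borel_measurable \<mu>"
  shows "(\<integral>\<^sup>+\<omega>. (\<Prod>k\<in>K. f k (\<omega> (\<sigma> k))) \<partial>PiM UNIV (\<lambda>_. \<mu>)) = (\<Prod>k\<in>K. \<integral>\<^sup>+u. f k u \<partial>\<mu>)"
proof -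
  interpret pps: product_prob_space "\<lambda>_. \<mu>" UNIV
    unfolding product_prob_space_def product_prob_space_axioms_def product_sigma_finite_def
    using P prob_space_imp_sigma_finite by blast
  define J where "J = \<sigma> ` K"
  define g where "g z = f (the_inv_into K \<sigma> z)" for z
  have fJ: "finite J" using K J_def by auto
  have gm: "g z \<in> borel_measurable \<mu>" if "z \<in> J" for z
    unfolding g_def by (rule f, rule the_inv_into_into[OF inj]) (use that in \<open>auto simp: J_def\<close>)
  have re: "(\<Prod>k\<in>K. h k (\<sigma> k)) = (\<Prod>z\<in>J. h (the_inv_into K \<sigma> z) z)" for h :: "'k \<Rightarrow> 'i \<Rightarrow> ennreal"
    unfolding J_def by (subst prod.reindex[OF inj]) (auto simp: the_inv_into_f_f[OF inj])
  have "(\<integral>\<^sup>+\<omega>. (\<Prod>k\<in>K. f k (\<omega> (\<sigma> k))) \<partial>PiM UNIV (\<lambda>_. \<mu>))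
     = (\<integral>\<^sup>+\<omega>. (\<Prod>z\<in>J. g z (restrict \<omega> J z)) \<partial>PiM UNIV (\<lambda>_. \<mu>))"
    by (subst re[of "\<lambda>k z. f k (_ z)"]) (auto simp: g_def intro!: nn_integral_cong prod.cong)
  also have "\<dots> = (\<integral>\<^sup>+x. (\<Prod>z\<in>J. g z (x z)) \<partial>distr (PiM UNIV (\<lambda>_. \<mu>)) (PiM J (\<lambda>_. \<mu>)) (\<lambda>\<omega>. restrict \<omega> J))"
    by (subst nn_integral_distr) (auto intro!: measurable_restrict_subset borel_measurable_prod_ennreal measurable_compose[OF measurable_component_singleton[where M="\<lambda>_. \<mu>"] gm])
  also have "\<dots> = (\<integral>\<^sup>+x. (\<Prod>z\<in>J. g z (x z)) \<partial>PiM J (\<lambda>_. \<mu>))"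
    by (subst pps.distr_PiM_restrict_finite) (auto simp: fJ)
  also have "\<dots> = (\<Prod>z\<in>J. \<integral>\<^sup>+u. g z u \<partial>\<mu>)"
    by (rule pps.product_nn_integral_prod) (auto simp: fJ gm)
  also have "\<dots> = (\<Prod>k\<in>K. \<integral>\<^sup>+u. f k u \<partial>\<mu>)"
    using re[of "\<lambda>k z. \<integral>\<^sup>+u. f k u \<partial>\<mu>"] by (simp add: g_def)
  finally show ?thesis .
qed



lemma lists_Suc_image:
  "{ds. length ds = Suc n \<and> set ds \<subseteq> D} = (\<lambda>(d,ds). d # ds) ` (D \<times> {ds. length ds = n \<and> set ds \<subseteq> D})"
proof (rule set_eqI, rule iffI)
  fix xs assume "xs \<in> {ds. length ds = Suc n \<and> set ds \<subseteq> D}"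
  then show "xs \<in> (\<lambda>(d,ds). d # ds) ` (D \<times> {ds. length ds = n \<and> set ds \<subseteq> D})"
    by (cases xs) auto
qed auto

lemma sum_lists_prod:
  fixes g :: "nat \<Rightarrow> 'a \<Rightarrow> 'b::comm_semiring_1"
  assumes D: "finite D"
  shows "(\<Sum>ds\<in>{ds. length ds = n \<and> set ds \<subseteq> D}. \<Prod>j<n. g j (ds!j)) = (\<Prod>j<n. \<Sum>d\<in>D. g j d)"
proof (induction n arbitrary: g)
  case 0
  have "{ds. length ds = 0 \<and> set ds \<subseteq> D} = {[]}" by auto
  then show ?case by simp
next
  case (Suc n)
  let ?L = "{ds. length ds = n \<and> set ds \<subseteq> D}"
  have inj: "inj_on (\<lambda>(d,ds). d # ds) (D \<times> ?L)" by (auto simp: inj_on_def)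
  have "(\<Sum>ds\<in>{ds. length ds = Suc n \<and> set ds \<subseteq> D}. \<Prod>j<Suc n. g j (ds!j))
      = (\<Sum>(d,ds)\<in>D \<times> ?L. \<Prod>j<Suc n. g j ((d#ds)!j))"
    unfolding lists_Suc_image by (subst sum.reindex[OF inj]) (simp add: case_prod_beta)
  also have "\<dots> = (\<Sum>d\<in>D. \<Sum>ds\<in>?L. g 0 d * (\<Prod>j<n. g (Suc j) (ds!j)))"
    by (subst sum.cartesian_product[symmetric]) (simp del: prod.lessThan_Suc add: prod.lessThan_Suc_shift)
  also have "\<dots> = (\<Sum>d\<in>D. g 0 d) * (\<Sum>ds\<in>?L. \<Prod>j<n. g (Suc j) (ds!j))"
    by (simp add: sum_product)
  also have "\<dots> = (\<Sum>d\<in>D. g 0 d) * (\<Prod>j<n. \<Sum>d\<in>D. g (Suc j) d)"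
    using Suc.IH[of "\<lambda>j. g (Suc j)"] by simp
  also have "\<dots> = (\<Prod>j<Suc n. \<Sum>d\<in>D. g j d)"
    by (simp del: prod.lessThan_Suc add: prod.lessThan_Suc_shift)
  finally show ?case .
qed

lemma sum_list_take_nth:
  fixes ds :: "'a::comm_monoid_add list"
  shows "k \<le> length ds \<Longrightarrow> sum_list (take k ds) = (\<Sum>j<k. ds!j)"
proof (induction k)
  case (Suc k)
  then have "take (Suc k) ds = take k ds @ [ds!k]" by (simp add: take_Suc_conv_app_nth)
  then show ?case using Suc by (simp add: add.commute)
qed simp

lemma exp_quad_bound:
  fixes x :: real
  assumes "\<bar>x\<bar> \<le> 1"
  shows "exp x \<le> 1 + x + x^2"
proof (cases "x \<ge> 0")
  case True then show ?thesis using exp_bound assms by auto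
next
  case False
  have h: "1 - x \<le> exp (-x)" using exp_ge_add_one_self[of "-x"] by simp
  have pos: "0 < 1 - x" using False by simp
  have "exp x * (1 - x) \<le> exp x * exp (-x)" using h by (intro mult_left_mono) auto
  then have "exp x * (1 - x) \<le> 1" by (simp add: exp_minus)
  moreover have "1 \<le> (1 + x + x^2) * (1 - x)"
  proof -
    have "(1 + x + x^2) * (1 - x) = 1 - x^3" by (simp add: algebra_simps power2_eq_square power3_eq_cube)
    moreover have "x^3 \<le> 0" using False mult_nonneg_nonpos[of "x*x" x] by (simp add: power3_eq_cube)
    ultimately show ?thesis by simp
  qed
  ultimately have "exp x * (1 - x) \<le> (1 + x + x^2) * (1 - x)" by linarith
  then show ?thesis using pos by simp
qed

lemma phi_bound:
  fixes p :: "int \<Rightarrow> real" and M :: nat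
  assumes pnn: "\<And>d. d \<in> {-int M..int M} \<Longrightarrow> 0 \<le> p d"
    and p1: "(\<Sum>d\<in>{-int M..int M}. p d) = 1"
    and V: "V = (\<Sum>d\<in>{-int M..int M}. real_of_int d * p d)"
    and lam: "0 \<le> lam" "lam * (2 * real M) \<le> 1"
  shows "(\<Sum>d\<in>{-int M..int M}. exp (lam * (real_of_int d - V)) * p d) \<le> exp (4 * real M ^ 2 * lam ^ 2)"
proof -
  let ?D = "{-int M..int M}"
  have Vb: "\<bar>V\<bar> \<le> real M"
  proof -
    have "\<bar>V\<bar> \<le> (\<Sum>d\<in>?D. \<bar>real_of_int d * p d\<bar>)" unfolding V by (rule sum_abs)
    also have "\<dots> \<le> (\<Sum>d\<in>?D. real M * p d)"
      by (intro sum_mono) (auto simp: abs_mult pnn intro!: mult_right_mono)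
    also have "\<dots> = real M" by (simp add: sum_distrib_left[symmetric] p1)
    finally show ?thesis .
  qed
  have xb: "\<bar>lam * (real_of_int d - V)\<bar> \<le> lam * (2 * real M)" if "d \<in> ?D" for d
  proof -
    have "\<bar>real_of_int d - V\<bar> \<le> 2 * real M" using that Vb by auto
    then show ?thesis using lam by (simp add: abs_mult mult_left_mono)
  qed
  have "(\<Sum>d\<in>?D. exp (lam * (real_of_int d - V)) * p d)
      \<le> (\<Sum>d\<in>?D. (1 + lam * (real_of_int d - V) + (lam * (real_of_int d - V))^2) * p d)"
    using xb lam by (intro sum_mono mult_right_mono exp_quad_bound pnn) (auto intro: order_trans)
  also have "\<dots> \<le> (\<Sum>d\<in>?D. (1 + lam * (real_of_int d - V) + (lam * (2 * real M))^2) * p d)"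
  proof (intro sum_mono mult_right_mono pnn add_left_mono)
    fix d assume d: "d \<in> ?D"
    have "\<bar>lam * (real_of_int d - V)\<bar>^2 \<le> (lam * (2 * real M))^2"
      by (rule power_mono[OF xb[OF d]]) simp
    then show "(lam * (real_of_int d - V))^2 \<le> (lam * (2 * real M))^2" by simp
  qed auto
  also have "\<dots> = (\<Sum>d\<in>?D. p d) + lam * ((\<Sum>d\<in>?D. real_of_int d * p d) - V * (\<Sum>d\<in>?D. p d)) + (lam * (2 * real M))^2 * (\<Sum>d\<in>?D. p d)"
    by (simp add: algebra_simps sum.distrib sum_distrib_left sum_subtractf)
  also have "\<dots> = 1 + 4 * real M ^ 2 * lam ^ 2" using p1 V by (simp add: power_mult_distrib)
  also have "\<dots> \<le> exp (4 * real M ^ 2 * lam ^ 2)" by (rule exp_ge_add_one_self)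
  finally show ?thesis .
qed

lemma prod_if_less:
  fixes h :: "nat \<Rightarrow> 'a::comm_monoid_mult"
  assumes "k \<le> n"
  shows "(\<Prod>j<n. if j < k then h j else 1) = (\<Prod>j<k. h j)"
proof -
  have "(\<Prod>j<n. if j < k then h j else 1) = (\<Prod>j\<in>{..<n} \<inter> {j. j < k}. h j)"
    by (simp add: prod.If_cases)
  also have "{..<n} \<inter> {j. j < k} = {..<k}" using assms by auto
  finally show ?thesis by simp
qed

lemma chernoff_sum:
  fixes p :: "int \<Rightarrow> real" and M :: nat
  assumes pnn: "\<And>d. d \<in> {-int M..int M} \<Longrightarrow> 0 \<le> p d"
    and p1: "(\<Sum>d\<in>{-int M..int M}. p d) = 1"
    and V: "V = (\<Sum>d\<in>{-int M..int M}. real_of_int d * p d)"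
    and lam: "0 \<le> lam" "lam * (2 * real M) \<le> 1"
    and kn: "k \<le> n"
  shows "(\<Sum>ds\<in>{ds. length ds = n \<and> set ds \<subseteq> {-int M..int M}}.
            exp (lam * (real_of_int (sum_list (take k ds)) - V * real k - a)) * (\<Prod>j<n. p (ds!j)))
         \<le> exp (4 * real M ^ 2 * lam ^ 2 * real n - lam * a)"
proof -
  let ?D = "{-int M..int M}"
  let ?L = "{ds. length ds = n \<and> set ds \<subseteq> ?D}"
  define \<phi> where "\<phi> = (\<Sum>d\<in>?D. exp (lam * (real_of_int d - V)) * p d)"
  define g where "g j d = (if j < k then exp (lam * (real_of_int d - V)) else 1) * p d" for j d
  have trm: "exp (lam * (real_of_int (sum_list (take k ds)) - V * real k - a)) * (\<Prod>j<n. p (ds!j))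
      = exp (- lam * a) * (\<Prod>j<n. g j (ds!j))" if ds: "ds \<in> ?L" for ds
  proof -
    have S: "real_of_int (sum_list (take k ds)) = (\<Sum>j<k. real_of_int (ds!j))"
      using ds kn by (simp add: sum_list_take_nth)
    have "lam * (real_of_int (sum_list (take k ds)) - V * real k - a)
        = - lam * a + (\<Sum>j<k. lam * (real_of_int (ds!j) - V))"
      unfolding S by (simp add: algebra_simps sum_subtractf sum_distrib_left)
    then have "exp (lam * (real_of_int (sum_list (take k ds)) - V * real k - a))
        = exp (- lam * a) * (\<Prod>j<k. exp (lam * (real_of_int (ds!j) - V)))"
      by (simp only: exp_add exp_sum[OF finite_lessThan])
    also have "(\<Prod>j<k. exp (lam * (real_of_int (ds!j) - V)))
        = (\<Prod>j<n. if j < k then exp (lam * (real_of_int (ds!j) - V)) else 1)"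
      by (rule prod_if_less[OF kn, symmetric])
    finally show ?thesis
      by (simp add: g_def prod.distrib)
  qed
  have "(\<Sum>ds\<in>?L. exp (lam * (real_of_int (sum_list (take k ds)) - V * real k - a)) * (\<Prod>j<n. p (ds!j)))
      = exp (- lam * a) * (\<Sum>ds\<in>?L. \<Prod>j<n. g j (ds!j))"
    by (simp add: trm sum_distrib_left)
  also have "(\<Sum>ds\<in>?L. \<Prod>j<n. g j (ds!j)) = (\<Prod>j<n. \<Sum>d\<in>?D. g j d)"
    by (rule sum_lists_prod) simp
  also have "\<dots> = (\<Prod>j<n. if j < k then \<phi> else 1)"
    by (intro prod.cong refl) (simp add: g_def \<phi>_def p1)
  also have "\<dots> = \<phi> ^ k" using prod_if_less[OF kn, of "\<lambda>_. \<phi>"] by simp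
  also have "\<phi> ^ k \<le> exp (4 * real M ^ 2 * lam ^ 2) ^ k"
    unfolding \<phi>_def
    by (intro power_mono phi_bound[OF pnn p1 V lam] sum_nonneg mult_nonneg_nonneg) (auto intro: pnn)
  also have "\<dots> = exp (4 * real M ^ 2 * lam ^ 2 * real k)"
    by (simp add: exp_of_nat_mult[symmetric] mult.commute)
  also have "\<dots> \<le> exp (4 * real M ^ 2 * lam ^ 2 * real n)"
    using kn by (intro exp_mono mult_left_mono) auto
  finally show ?thesis
    by (simp add: exp_diff exp_minus mult_left_mono divide_simps)
qed




definition Ls :: "nat \<Rightarrow> nat \<Rightarrow> int list set" where
  "Ls M n = {ds. length ds = n \<and> set ds \<subseteq> {-int M..int M}}"

definition Wt :: "nat \<Rightarrow> (int \<times> int \<Rightarrow> int \<Rightarrow> real) \<Rightarrow> int \<Rightarrow> int \<Rightarrow> nat \<Rightarrow> int list \<Rightarrow> real" where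
  "Wt M \<omega> I T n ds = (\<Prod>k<n. \<omega> (walk_pos I ds k, T - int k) (ds!k))"

definition Bnd :: "nat \<Rightarrow> real \<Rightarrow> real \<Rightarrow> real \<Rightarrow> (int \<times> int \<Rightarrow> int \<Rightarrow> real) \<Rightarrow> int \<Rightarrow> int \<Rightarrow> nat \<Rightarrow> real" where
  "Bnd M V lam a \<omega> I T n = (\<Sum>k\<in>{1..n}. \<Sum>ds\<in>Ls M n.
      exp (lam * (real_of_int (sum_list (take k ds)) - V * real k - a)) * Wt M \<omega> I T n ds)"

lemma finite_Ls: "finite (Ls M n)"
  unfolding Ls_def using finite_lists_length_eq[OF finite_atLeastAtMost_int, of "-int M" "int M" n]
  by (simp add: conj_commute)

lemma qp_nonneg:
  assumes nn: "\<And>z y. 0 \<le> \<omega> z y"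
  shows "0 \<le> quenched_prob M \<omega> I T n E"
  unfolding quenched_prob_def using nn by (intro sum_nonneg) (auto intro: prod_nonneg)

lemma qp_le_Bnd:
  assumes nn: "\<And>z y. 0 \<le> \<omega> z y" and lam: "0 \<le> lam"
  shows "quenched_prob M \<omega> I T n (\<lambda>X. \<exists>k\<in>{1..n}. real_of_int (X k - I) - V * real k \<ge> a)
         \<le> Bnd M V lam a \<omega> I T n"
proof -
  have W0: "0 \<le> Wt M \<omega> I T n ds" for ds unfolding Wt_def using nn by (intro prod_nonneg) auto
  have "quenched_prob M \<omega> I T n (\<lambda>X. \<exists>k\<in>{1..n}. real_of_int (X k - I) - V * real k \<ge> a)
     = (\<Sum>ds\<in>Ls M n. if \<exists>k\<in>{1..n}. real_of_int (sum_list (take k ds)) - V * real k \<ge> a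
                       then Wt M \<omega> I T n ds else 0)"
    unfolding quenched_prob_def Ls_def Wt_def by (simp add: walk_pos_def)
  also have "\<dots> \<le> (\<Sum>ds\<in>Ls M n. \<Sum>k\<in>{1..n}.
      exp (lam * (real_of_int (sum_list (take k ds)) - V * real k - a)) * Wt M \<omega> I T n ds)"
  proof (intro sum_mono)
    fix ds assume "ds \<in> Ls M n"
    show "(if \<exists>k\<in>{1..n}. real_of_int (sum_list (take k ds)) - V * real k \<ge> a
                       then Wt M \<omega> I T n ds else 0)
      \<le> (\<Sum>k\<in>{1..n}. exp (lam * (real_of_int (sum_list (take k ds)) - V * real k - a)) * Wt M \<omega> I T n ds)"
    proof (cases "\<exists>k\<in>{1..n}. real_of_int (sum_list (take k ds)) - V * real k \<ge> a")
      case True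
      then obtain k where k: "k \<in> {1..n}" "real_of_int (sum_list (take k ds)) - V * real k \<ge> a" by blast
      have "1 \<le> exp (lam * (real_of_int (sum_list (take k ds)) - V * real k - a))"
        using k lam by simp
      then have "Wt M \<omega> I T n ds \<le> exp (lam * (real_of_int (sum_list (take k ds)) - V * real k - a)) * Wt M \<omega> I T n ds"
        using W0[of ds] by (simp add: mult_le_cancel_right1)
      also have "\<dots> \<le> (\<Sum>k\<in>{1..n}. exp (lam * (real_of_int (sum_list (take k ds)) - V * real k - a)) * Wt M \<omega> I T n ds)"
        using k W0[of ds] by (intro member_le_sum) auto
      finally show ?thesis using True by simp
    next
      case False
      then show ?thesis using W0[of ds] by (simp add: sum_nonneg)
    qed
  qed
  also have "\<dots> = Bnd M V lam a \<omega> I T n"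
    unfolding Bnd_def by (rule sum.swap)
  finally show ?thesis .
qed

lemma Pvec_bounds:
  assumes "u \<in> Pvec M"
  shows "0 \<le> u d" "u d \<le> 1"
proof -
  show "0 \<le> u d" using assms by (simp add: Pvec_def)
  show "u d \<le> 1"
  proof (cases "d \<in> {-int M..int M}")
    case True
    have "u d \<le> (\<Sum>y\<in>{-int M..int M}. u y)"
      using assms True by (intro member_le_sum) (auto simp: Pvec_def)
    then show ?thesis using assms by (simp add: Pvec_def)
  next
    case False
    then have "\<bar>d\<bar> > int M" by auto
    then show ?thesis using assms by (simp add: Pvec_def)
  qed
qed

lemma meas_u:
  assumes S: "sets \<mu> = sets vec_space"
  shows "(\<lambda>u. u d) \<in> borel_measurable \<mu>"
proof -
  have "(\<lambda>u. u d) \<in> borel_measurable vec_space"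
    unfolding vec_space_def by (rule measurable_component_singleton) simp
  then show ?thesis by (subst measurable_cong_sets[OF S refl])
qed

lemma meas_env:
  assumes S: "sets \<mu> = sets vec_space"
  shows "(\<lambda>\<omega>. \<omega> z d) \<in> borel_measurable (env_measure \<mu>)"
  unfolding env_measure_def
  by (rule measurable_compose[OF measurable_component_singleton[where M="\<lambda>_. \<mu>"] meas_u[OF S]]) simp

lemma AE_env_good:
  assumes P: "prob_space \<mu>" and AEP: "AE u in \<mu>. u \<in> Pvec M"
  shows "AE \<omega> in env_measure \<mu>. \<forall>z. \<omega> z \<in> Pvec M"
  unfolding env_measure_def AE_all_countable
  using AE_PiM_component[of UNIV "\<lambda>_. \<mu>", OF _ _ AEP] P by auto

lemma int_u:
  assumes P: "prob_space \<mu>" and S: "sets \<mu> = sets vec_space" and AEP: "AE u in \<mu>. u \<in> Pvec M"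
  shows "integrable \<mu> (\<lambda>u. u d)" "(\<integral>\<^sup>+u. ennreal (u d) \<partial>\<mu>) = ennreal (\<integral>u. u d \<partial>\<mu>)"
    "0 \<le> (\<integral>u. u d \<partial>\<mu>)"
proof -
  interpret prob_space \<mu> by (rule P)
  have ae: "AE u in \<mu>. 0 \<le> u d \<and> u d \<le> 1" using AEP by eventually_elim (auto intro: Pvec_bounds)
  show I: "integrable \<mu> (\<lambda>u. u d)"
    by (rule integrable_const_bound[where B=1]) (use ae meas_u[OF S] in auto)
  show "(\<integral>\<^sup>+u. ennreal (u d) \<partial>\<mu>) = ennreal (\<integral>u. u d \<partial>\<mu>)"
    by (rule nn_integral_eq_integral[OF I]) (use ae in auto)
  show "0 \<le> (\<integral>u. u d \<partial>\<mu>)"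
    by (rule integral_nonneg_AE) (use ae in auto)
qed

lemma ennreal_sum_sum_mult:
  fixes f :: "'a \<Rightarrow> 'b \<Rightarrow> real"
  assumes "\<And>k x. 0 \<le> f k x" "\<And>x. 0 \<le> g x"
  shows "(\<Sum>k\<in>A. \<Sum>x\<in>B. ennreal (f k x) * ennreal (g x)) = ennreal (\<Sum>k\<in>A. \<Sum>x\<in>B. f k x * g x)"
proof -
  have "(\<Sum>k\<in>A. \<Sum>x\<in>B. ennreal (f k x) * ennreal (g x)) = (\<Sum>k\<in>A. \<Sum>x\<in>B. ennreal (f k x * g x))"
    using assms by (simp add: ennreal_mult)
  also have "\<dots> = (\<Sum>k\<in>A. ennreal (\<Sum>x\<in>B. f k x * g x))"
    using assms by (intro sum.cong refl sum_ennreal) auto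
  also have "\<dots> = ennreal (\<Sum>k\<in>A. \<Sum>x\<in>B. f k x * g x)"
    using assms by (intro sum_ennreal sum_nonneg) auto
  finally show ?thesis .
qed

lemma Bnd_integral:
  assumes P: "prob_space \<mu>" and S: "sets \<mu> = sets vec_space" and AEP: "AE u in \<mu>. u \<in> Pvec M"
  shows "(\<integral>\<^sup>+\<omega>. ennreal (Bnd M V lam a \<omega> I T n) \<partial>env_measure \<mu>)
    = ennreal (\<Sum>k\<in>{1..n}. \<Sum>ds\<in>Ls M n. exp (lam * (real_of_int (sum_list (take k ds)) - V * real k - a))
         * (\<Prod>j<n. (\<integral>u. u (ds!j) \<partial>\<mu>)))"
proof -
  define \<sigma> where "\<sigma> ds j = (walk_pos I ds j, T - int j)" for ds j
  define E where "E k ds = exp (lam * (real_of_int (sum_list (take k ds)) - V * real k - a))" for k ds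
  have inj: "inj_on (\<sigma> ds) K" for ds K by (auto simp: inj_on_def \<sigma>_def)
  note mu = meas_env[OF S, measurable]
  have "AE \<omega> in env_measure \<mu>. ennreal (Bnd M V lam a \<omega> I T n)
      = (\<Sum>k\<in>{1..n}. \<Sum>ds\<in>Ls M n. ennreal (E k ds) * (\<Prod>j<n. ennreal (\<omega> (\<sigma> ds j) (ds!j))))"
    using AE_env_good[OF P AEP]
  proof eventually_elim
    case (elim \<omega>)
    then have nn: "0 \<le> \<omega> z y" for z y using Pvec_bounds by blast
    have "(\<Sum>k\<in>{1..n}. \<Sum>ds\<in>Ls M n. ennreal (E k ds) * (\<Prod>j<n. ennreal (\<omega> (\<sigma> ds j) (ds!j))))
       = (\<Sum>k\<in>{1..n}. \<Sum>ds\<in>Ls M n. ennreal (E k ds) * ennreal (Wt M \<omega> I T n ds))"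
      unfolding Wt_def \<sigma>_def using nn by (simp add: prod_ennreal)
    also have "\<dots> = ennreal (Bnd M V lam a \<omega> I T n)"
      unfolding Bnd_def E_def
      by (rule ennreal_sum_sum_mult) (auto simp: Wt_def nn prod_nonneg)
    finally show ?case by simp
  qed
  then have "(\<integral>\<^sup>+\<omega>. ennreal (Bnd M V lam a \<omega> I T n) \<partial>env_measure \<mu>)
      = (\<integral>\<^sup>+\<omega>. (\<Sum>k\<in>{1..n}. \<Sum>ds\<in>Ls M n. ennreal (E k ds) * (\<Prod>j<n. ennreal (\<omega> (\<sigma> ds j) (ds!j)))) \<partial>env_measure \<mu>)"
    by (rule nn_integral_cong_AE)
  also have "\<dots> = (\<Sum>k\<in>{1..n}. \<Sum>ds\<in>Ls M n. ennreal (E k ds) * (\<integral>\<^sup>+\<omega>. (\<Prod>j<n. ennreal (\<omega> (\<sigma> ds j) (ds!j))) \<partial>env_measure \<mu>))"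
    by (simp add: nn_integral_sum nn_integral_cmult)
  also have "\<dots> = (\<Sum>k\<in>{1..n}. \<Sum>ds\<in>Ls M n. ennreal (E k ds) * (\<Prod>j<n. ennreal (\<integral>u. u (ds!j) \<partial>\<mu>)))"
  proof (intro sum.cong refl arg_cong2[where f="(*)"])
    fix ds
    show "(\<integral>\<^sup>+\<omega>. (\<Prod>j<n. ennreal (\<omega> (\<sigma> ds j) (ds!j))) \<partial>env_measure \<mu>) = (\<Prod>j<n. ennreal (\<integral>u. u (ds!j) \<partial>\<mu>))"
      unfolding env_measure_def
      by (subst prod_coord_nn[OF P finite_lessThan inj[of ds], where f="\<lambda>j u. ennreal (u (ds!j))"])
         (auto simp: int_u[OF P S AEP] intro: measurable_compose[OF meas_u[OF S]])
  qed
  also have "\<dots> = ennreal (\<Sum>k\<in>{1..n}. \<Sum>ds\<in>Ls M n. E k ds * (\<Prod>j<n. (\<integral>u. u (ds!j) \<partial>\<mu>)))"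
    using int_u(3)[OF P S AEP]
    by (subst ennreal_sum_sum_mult[symmetric]) (auto simp: prod_nonneg prod_ennreal E_def)
  finally show ?thesis unfolding E_def .
qed




lemma lim_x_exp:
  fixes c \<gamma> :: real assumes "c > 0" "\<gamma> > 0"
  shows "((\<lambda>x::real. x * exp (- c * x powr \<gamma>)) \<longlongrightarrow> 0) at_top"
  using assms by real_asymp

lemma lam_facts:
  fixes M s :: nat and c \<gamma> :: real
  assumes "16 * M^2 \<le> s" "s > 0"
  shows "2 / sqrt (real s) * (2 * real M) \<le> 1"
    "4 * real M ^ 2 * (2 / sqrt (real s)) ^ 2 * real s = 16 * real M ^ 2"
    "2 / sqrt (real s) * (c * real s powr (1/2 + \<gamma>)) = 2 * c * real s powr \<gamma>"
    "0 \<le> 2 / sqrt (real s)"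
proof -
  have sp: "0 < sqrt (real s)" using assms by simp
  have "real (16 * M^2) \<le> real s" using assms(1) by linarith
  then have "sqrt (16 * real M ^ 2) \<le> sqrt (real s)" by simp
  moreover have "sqrt (16 * real M ^ 2) = 4 * real M" by (simp add: real_sqrt_mult)
  ultimately have "4 * real M \<le> sqrt (real s)" by simp
  then show "2 / sqrt (real s) * (2 * real M) \<le> 1" using sp by (simp add: field_simps)
  show "4 * real M ^ 2 * (2 / sqrt (real s)) ^ 2 * real s = 16 * real M ^ 2"
    using assms by (simp add: power_divide)
  have "real s powr (1/2 + \<gamma>) = sqrt (real s) * real s powr \<gamma>"
    using assms by (simp add: powr_add powr_half_sqrt)
  then show "2 / sqrt (real s) * (c * real s powr (1/2 + \<gamma>)) = 2 * c * real s powr \<gamma>"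
    using sp by simp
  show "0 \<le> 2 / sqrt (real s)" by simp
qed




lemma Bnd_meas:
  assumes S: "sets \<mu> = sets vec_space"
  shows "(\<lambda>\<omega>. Bnd M V lam a \<omega> I T n) \<in> borel_measurable (env_measure \<mu>)"
  unfolding Bnd_def Wt_def
  by (intro borel_measurable_sum borel_measurable_times borel_measurable_const borel_measurable_prod meas_env[OF S])

lemma Bnd_nonneg:
  assumes nn: "\<And>z y. 0 \<le> \<omega> z y"
  shows "0 \<le> Bnd M V lam a \<omega> I T n"
  unfolding Bnd_def Wt_def using nn by (intro sum_nonneg mult_nonneg_nonneg prod_nonneg) auto

lemma p_sum_one:
  assumes P: "prob_space \<mu>" and S: "sets \<mu> = sets vec_space" and AEP: "AE u in \<mu>. u \<in> Pvec M"
  shows "(\<Sum>d\<in>{-int M..int M}. (\<integral>u. u d \<partial>\<mu>)) = 1"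
proof -
  interpret prob_space \<mu> by (rule P)
  have sm: "(\<lambda>u::int\<Rightarrow>real. \<Sum>d\<in>{-int M..int M}. u d) \<in> borel_measurable \<mu>"
    by (rule borel_measurable_sum) (rule meas_u[OF S])
  have "(\<Sum>d\<in>{-int M..int M}. (\<integral>u. u d \<partial>\<mu>)) = (\<integral>u. (\<Sum>d\<in>{-int M..int M}. u d) \<partial>\<mu>)"
    using Bochner_Integration.integral_sum[where M=\<mu> and I="{-int M..int M}" and f="\<lambda>d u. u d"] int_u(1)[OF P S AEP] by simp
  also have "\<dots> = (\<integral>u. 1 \<partial>\<mu>)"
    by (rule integral_cong_AE) (use AEP sm in \<open>auto simp: Pvec_def\<close>)
  also have "\<dots> = 1" by (simp add: prob_space)
  finally show ?thesis .
qed




theorem lemma4p3: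
  fixes M :: nat and \<mu> :: "(int \<Rightarrow> real) measure"
    and i \<tau> :: "nat \<Rightarrow> nat \<Rightarrow> int" and v s :: "nat \<Rightarrow> nat"
    and \<alpha> \<gamma> c :: real
  assumes "M \<ge> 1"
    and "prob_space \<mu>" and "sets \<mu> = sets vec_space"
    and "AE u in \<mu>. u \<in> Pvec M"
    and "\<And>n. v n \<ge> 1" and "\<And>n. s n > 0"
    and "filterlim s at_top sequentially"
    and "\<alpha> > 0" and "\<gamma> > 0" and "c > 0"
    and "summable (\<lambda>n. real (v n) * real (s n) powr \<alpha> * exp (- c * real (s n) powr \<gamma>))"
  shows "AE \<omega> in env_measure \<mu>.
    (\<lambda>n. Max ((\<lambda>m. real (s n) powr \<alpha> *
        quenched_prob M \<omega> (i m n) (\<tau> m n) (s n)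
          (\<lambda>X. \<exists>k\<in>{1..s n}. real_of_int (X k - i m n) - drift M \<mu> * real k
                 \<ge> c * real (s n) powr (1/2 + \<gamma>))) ` {1..v n}))
    \<longlonglongrightarrow> 0"
proof -
  note P = assms(2) and S = assms(3) and AEP = assms(4)
  define V where "V = drift M \<mu>"
  define p where "p d = (\<integral>u. u d \<partial>\<mu>)" for d
  have pnn: "0 \<le> p d" for d unfolding p_def by (rule int_u(3)[OF P S AEP])
  have p1: "(\<Sum>d\<in>{-int M..int M}. p d) = 1" unfolding p_def by (rule p_sum_one[OF P S AEP])
  have Vd: "V = (\<Sum>d\<in>{-int M..int M}. real_of_int d * p d)" unfolding V_def drift_def p_def ..
  define N0 where "N0 = 16 * M^2"
  define lam where "lam n = 2 / sqrt (real (s n))" for n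
  define a where "a n = c * real (s n) powr (1/2 + \<gamma>)" for n
  define B where "B n = real (s n) * exp (16 * real M^2 - 2 * c * real (s n) powr \<gamma>)" for n
  define Y where "Y n \<omega> = (if N0 \<le> s n then (\<Sum>m\<in>{1..v n}. real (s n) powr \<alpha> *
      Bnd M V (lam n) (a n) \<omega> (i m n) (\<tau> m n) (s n)) else 0)" for n \<omega>
  define b where "b n = (if N0 \<le> s n then real (v n) * (real (s n) powr \<alpha> * B n) else 0)" for n
  have B0: "0 \<le> B n" for n unfolding B_def by simp

  have Rbound: "(\<Sum>k\<in>{1..s n}. \<Sum>ds\<in>Ls M (s n).
        exp (lam n * (real_of_int (sum_list (take k ds)) - V * real k - a n)) * (\<Prod>j<s n. p (ds!j)))
      \<le> B n" if N: "N0 \<le> s n" for n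
  proof -
    have N': "16 * M^2 \<le> s n" using N by (simp add: N0_def)
    note lf = lam_facts(1,2,4)[OF N' assms(6)[of n]] lam_facts(3)[OF N' assms(6)[of n], of c \<gamma>]
    have "(\<Sum>ds\<in>Ls M (s n).
        exp (lam n * (real_of_int (sum_list (take k ds)) - V * real k - a n)) * (\<Prod>j<s n. p (ds!j)))
      \<le> exp (16 * real M^2 - 2 * c * real (s n) powr \<gamma>)" if k: "k \<in> {1..s n}" for k
    proof -
      have "(\<Sum>ds\<in>Ls M (s n).
        exp (lam n * (real_of_int (sum_list (take k ds)) - V * real k - a n)) * (\<Prod>j<s n. p (ds!j)))
        \<le> exp (4 * real M ^ 2 * lam n ^ 2 * real (s n) - lam n * a n)"
        unfolding Ls_def
        by (rule chernoff_sum[OF _ p1 Vd]) (use pnn k lf in \<open>auto simp: lam_def\<close>)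
      also have "4 * real M ^ 2 * lam n ^ 2 * real (s n) - lam n * a n = 16 * real M^2 - 2 * c * real (s n) powr \<gamma>"
        using lf by (simp add: lam_def a_def)
      finally show ?thesis .
    qed
    then have "(\<Sum>k\<in>{1..s n}. \<Sum>ds\<in>Ls M (s n).
        exp (lam n * (real_of_int (sum_list (take k ds)) - V * real k - a n)) * (\<Prod>j<s n. p (ds!j)))
      \<le> real (card {1..s n}) * exp (16 * real M^2 - 2 * c * real (s n) powr \<gamma>)"
      by (rule sum_bounded_above)
    then show ?thesis by (simp add: B_def)
  qed
  note good = AE_env_good[OF P AEP]
  have gnn: "\<forall>z. \<omega> z \<in> Pvec M \<Longrightarrow> 0 \<le> \<omega> z y" for \<omega> z y using Pvec_bounds by blast
  have intY: "(\<integral>\<^sup>+\<omega>. ennreal (Y n \<omega>) \<partial>env_measure \<mu>) \<le> ennreal (b n)" for n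
  proof (cases "N0 \<le> s n")
    case False
    then show ?thesis by (simp add: Y_def b_def)
  next
    case True
    have "AE \<omega> in env_measure \<mu>. ennreal (Y n \<omega>) = (\<Sum>m\<in>{1..v n}. ennreal (real (s n) powr \<alpha>) *
        ennreal (Bnd M V (lam n) (a n) \<omega> (i m n) (\<tau> m n) (s n)))"
      using good
    proof eventually_elim
      case (elim \<omega>)
      have "0 \<le> Bnd M V (lam n) (a n) \<omega> I T (s n)" for I T
        by (rule Bnd_nonneg) (rule gnn[OF elim])
      then show ?case using True by (simp add: Y_def ennreal_mult[symmetric] sum_nonneg)
    qed
    then have "(\<integral>\<^sup>+\<omega>. ennreal (Y n \<omega>) \<partial>env_measure \<mu>) = (\<integral>\<^sup>+\<omega>. (\<Sum>m\<in>{1..v n}. ennreal (real (s n) powr \<alpha>) *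
        ennreal (Bnd M V (lam n) (a n) \<omega> (i m n) (\<tau> m n) (s n))) \<partial>env_measure \<mu>)"
      by (rule nn_integral_cong_AE)
    also have "\<dots> = (\<Sum>m\<in>{1..v n}. ennreal (real (s n) powr \<alpha>) *
        (\<integral>\<^sup>+\<omega>. ennreal (Bnd M V (lam n) (a n) \<omega> (i m n) (\<tau> m n) (s n)) \<partial>env_measure \<mu>))"
      using Bnd_meas[OF S] by (simp add: nn_integral_sum nn_integral_cmult)
    also have "\<dots> \<le> (\<Sum>m\<in>{1..v n}. ennreal (real (s n) powr \<alpha>) * ennreal (B n))"
    proof (intro sum_mono mult_left_mono)
      fix m
      show "(\<integral>\<^sup>+\<omega>. ennreal (Bnd M V (lam n) (a n) \<omega> (i m n) (\<tau> m n) (s n)) \<partial>env_measure \<mu>) \<le> ennreal (B n)"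
        unfolding Bnd_integral[OF P S AEP]
        using Rbound[OF True] by (intro ennreal_leI) (simp add: p_def)
    qed simp
    also have "\<dots> = ennreal (b n)"
      using True B0 by (simp add: b_def ennreal_of_nat_eq_real_of_nat ennreal_mult[symmetric])
    finally show ?thesis .
  qed
  have sreal: "filterlim (\<lambda>n. real (s n)) at_top sequentially"
    by (rule filterlim_compose[OF filterlim_real_sequentially assms(7)])
  have ev1: "eventually (\<lambda>n. real (s n) * exp (- c * real (s n) powr \<gamma>) < 1) sequentially"
    using filterlim_compose[OF lim_x_exp[OF assms(10) assms(9)] sreal] by (rule order_tendstoD(2)) simp
  have b0: "0 \<le> b n" for n using B0 by (simp add: b_def)
  have sumb: "summable b"
  proof (rule summable_comparison_test_ev)
    show "eventually (\<lambda>n. norm (b n) \<le> exp (16 * real M^2) * (real (v n) * real (s n) powr \<alpha> * exp (- c * real (s n) powr \<gamma>))) sequentially"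
      using ev1
    proof eventually_elim
      case (elim n)
      let ?e = "exp (- c * real (s n) powr \<gamma>)"
      have R0: "0 \<le> exp (16 * real M^2) * (real (v n) * real (s n) powr \<alpha> * ?e)" by simp
      show ?case
      proof (cases "N0 \<le> s n")
        case False then show ?thesis using R0 by (simp add: b_def)
      next
        case True
        have "exp (16 * real M^2 - 2 * c * real (s n) powr \<gamma>) = exp (16 * real M^2) * ?e * ?e"
          by (simp add: exp_add[symmetric] algebra_simps)
        then have "B n = exp (16 * real M^2) * ?e * (real (s n) * ?e)" by (simp add: B_def algebra_simps)
        also have "\<dots> \<le> exp (16 * real M^2) * ?e * 1"
          using elim by (intro mult_left_mono) auto
        finally have "B n \<le> exp (16 * real M^2) * ?e" by simp
        then have "real (v n) * (real (s n) powr \<alpha> * B n) \<le> real (v n) * (real (s n) powr \<alpha> * (exp (16 * real M^2) * ?e))"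
          by (intro mult_left_mono) auto
        then show ?thesis using True b0[of n] by (simp add: b_def algebra_simps)
      qed
    qed
    show "summable (\<lambda>n. exp (16 * real M^2) * (real (v n) * real (s n) powr \<alpha> * exp (- c * real (s n) powr \<gamma>)))"
      by (rule summable_mult[OF assms(11)])
  qed
  have Yrm: "(\<lambda>\<omega>. Y n \<omega>) \<in> borel_measurable (env_measure \<mu>)" for n
    unfolding Y_def
    by (cases "N0 \<le> s n") (simp_all add: borel_measurable_sum borel_measurable_times Bnd_meas[OF S])
  have Ym: "(\<lambda>\<omega>. ennreal (Y n \<omega>)) \<in> borel_measurable (env_measure \<mu>)" for n
    using measurable_compose[OF Yrm measurable_ennreal] .
  have "(\<integral>\<^sup>+\<omega>. (\<Sum>n. ennreal (Y n \<omega>)) \<partial>env_measure \<mu>) = (\<Sum>n. \<integral>\<^sup>+\<omega>. ennreal (Y n \<omega>) \<partial>env_measure \<mu>)"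
    by (rule nn_integral_suminf) (rule Ym)
  also have "\<dots> \<le> (\<Sum>n. ennreal (b n))"
    by (intro suminf_le intY summableI)
  also have "\<dots> = ennreal (\<Sum>n. b n)"
    by (rule suminf_ennreal2[OF b0 sumb])
  finally have fin: "(\<integral>\<^sup>+\<omega>. (\<Sum>n. ennreal (Y n \<omega>)) \<partial>env_measure \<mu>) \<noteq> \<infinity>"
    by (auto simp: top_unique)
  have AEfin: "AE \<omega> in env_measure \<mu>. (\<Sum>n. ennreal (Y n \<omega>)) \<noteq> \<infinity>"
    by (rule nn_integral_PInf_AE[OF _ fin]) (intro borel_measurable_suminf_order Ym)
  have ev2: "eventually (\<lambda>n. N0 \<le> s n) sequentially"
    using assms(7) by (simp add: filterlim_at_top)
  show ?thesis using good AEfin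
  proof eventually_elim
    case (elim \<omega>)
    have nn: "\<And>z y. 0 \<le> \<omega> z y" using gnn[OF elim(1)] by blast
    have Ynn: "0 \<le> Y n \<omega>" for n
      unfolding Y_def using Bnd_nonneg[OF nn] by (auto intro!: sum_nonneg)
    have "summable (\<lambda>n. Y n \<omega>)" using elim(2) by (intro summable_suminf_not_top[OF Ynn]) simp
    then have Y0: "(\<lambda>n. Y n \<omega>) \<longlonglongrightarrow> 0" by (rule summable_LIMSEQ_zero)
    define F where "F n m = real (s n) powr \<alpha> *
        quenched_prob M \<omega> (i m n) (\<tau> m n) (s n)
          (\<lambda>X. \<exists>k\<in>{1..s n}. real_of_int (X k - i m n) - drift M \<mu> * real k
                 \<ge> c * real (s n) powr (1/2 + \<gamma>))" for n m
    have F0: "0 \<le> F n m" for n m unfolding F_def using qp_nonneg[OF nn] by simp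
    have FB: "F n m \<le> real (s n) powr \<alpha> * Bnd M V (lam n) (a n) \<omega> (i m n) (\<tau> m n) (s n)" for n m
    proof -
      have "quenched_prob M \<omega> (i m n) (\<tau> m n) (s n)
          (\<lambda>X. \<exists>k\<in>{1..s n}. real_of_int (X k - i m n) - drift M \<mu> * real k
                 \<ge> c * real (s n) powr (1/2 + \<gamma>)) \<le> Bnd M V (lam n) (a n) \<omega> (i m n) (\<tau> m n) (s n)"
        unfolding V_def a_def by (rule qp_le_Bnd[OF nn]) (simp add: lam_def)
      then show ?thesis unfolding F_def by (intro mult_left_mono) auto
    qed
    have fin1: "finite (F n ` {1..v n})" and ne: "F n ` {1..v n} \<noteq> {}" for n
      using assms(5)[of n] by auto
    have "(\<lambda>n. Max (F n ` {1..v n})) \<longlonglongrightarrow> 0"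
    proof (rule tendsto_sandwich[OF _ _ tendsto_const Y0])
      show "eventually (\<lambda>n. 0 \<le> Max (F n ` {1..v n})) sequentially"
      proof (intro always_eventually allI)
        fix n
        have "F n 1 \<le> Max (F n ` {1..v n})"
          using fin1 assms(5)[of n] by (intro Max_ge) auto
        then show "0 \<le> Max (F n ` {1..v n})" using F0[of n 1] by linarith
      qed
      show "eventually (\<lambda>n. Max (F n ` {1..v n}) \<le> Y n \<omega>) sequentially"
        using ev2
      proof eventually_elim
        case (elim n)
        show "Max (F n ` {1..v n}) \<le> Y n \<omega>"
        proof (subst Max_le_iff[OF fin1 ne], intro ballI)
          fix x assume "x \<in> F n ` {1..v n}"
          then obtain m where m: "m \<in> {1..v n}" "x = F n m" by auto
          have "F n m \<le> real (s n) powr \<alpha> * Bnd M V (lam n) (a n) \<omega> (i m n) (\<tau> m n) (s n)" by (rule FB)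
          also have "\<dots> \<le> (\<Sum>m\<in>{1..v n}. real (s n) powr \<alpha> * Bnd M V (lam n) (a n) \<omega> (i m n) (\<tau> m n) (s n))"
            using m Bnd_nonneg[OF nn] by (intro member_le_sum) auto
          also have "\<dots> = Y n \<omega>" using elim by (simp add: Y_def)
          finally show "x \<le> Y n \<omega>" using m by simp
        qed
      qed
    qed
    then show ?case unfolding F_def .
  qed
qed


end
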